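(* In Setting (S), for each $0\le i\le \ell-1$, the vertex set of the slice $S_i$, namely $V(G_i)\setminus V(G_{i+1})=H'_{i+1}\setminus(H_1'\cup\cdots\cup H_i')$, is gated in $G$.
   Context: Graphs are finite, simple, connected, undirected; $d$ is shortest-path distance; $I(u,v)=\{x:d(u,x)+d(x,v)=d(u,v)\}$; a graph is median if every triple $x,y,z$ has $|I(x,y)\cap I(y,z)\cap I(z,x)|=1$. A vertex set $H$ is gated if each vertex $v$ has a vertex $g_H(v)\in H$ with $g_H(v)\in I(v,x)$ for all $x\in H$. $\Theta$-classes: classes of the reflexive–transitive closure of the relation on edges "$uv$ and $xy$ are opposite edges of a 4-cycle". Deleting a $\Theta$-class $E_i$ of a median graph leaves two components with vertex sets (halfspaces) $H_i',H_i''$. For $u\ne v$, the ladder set $L_{u,v}$ is the set of $\Theta$-classes separating $u$ from $v$ that contain an edge incident to $u$. Setting (S): $(G,\omega)$ is a median graph with $n\ge 3$ vertices and weights $\omega:V(G)\to\mathbb{N}$ such that every $\Theta$-class satisfies $\min\{|H_i'|,|H_i''|\}<n/(2\log n)$ ($\log$ natural); $H_i'$ denotes the smaller (minority) and $H_i''$ the larger (majority) halfspace. $v_0$ is the unique vertex in all majority halfspaces; $u_{\max}$ maximizes $d(v_0,u)+\omega(u)$ (chosen $=v_0$ if possible) and $u_{\max}\ne v_0$ is assumed. $L(G)=L_{v_0,u_{\max}}=\{E_1,\dots,E_\ell\}$. Large sets: $G_0=G$, $G_{i+1}=G[V(G_i)\setminus H'_{i+1}]$. Slices: $S_i=G[V(G_i)\setminus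 V(G_{i+1})]$ for $0\le i\le\ell-1$. *)

theory Defs
  imports Complex_Main
begin

text \<open>Graphs: vertex set V and a symmetric irreflexive edge relation E \<subseteq> V \<times> V.
Edges as unordered objects are represented as two-element sets.\<close>

definition walk :: "('a \<times> 'a) set \<Rightarrow> 'a list \<Rightarrow> bool" where
  "walk E p \<longleftrightarrow> p \<noteq> [] \<and> (\<forall>i < length p - 1. (p ! i, p ! Suc i) \<in> E)"

definition simple_connected_graph :: "'a set \<Rightarrow> ('a \<times> 'a) set \<Rightarrow> bool" where
  "simple_connected_graph V E \<longleftrightarrow> finite V \<and> E \<subseteq> V \<times> V \<and> sym E \<and> (\<forall>v. (v, v) \<notin> E)
     \<and> (\<forall>u\<in>V. \<forall>v\<in>V. \<exists>p. walk E p \<and> hd p = u \<and> last p = v)"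

definition gdist :: "('a \<times> 'a) set \<Rightarrow> 'a \<Rightarrow> 'a \<Rightarrow> nat" where
  "gdist E u v = (LEAST n. \<exists>p. walk E p \<and> hd p = u \<and> last p = v \<and> length p = Suc n)"

definition interval :: "'a set \<Rightarrow> ('a \<times> 'a) set \<Rightarrow> 'a \<Rightarrow> 'a \<Rightarrow> 'a set" where
  "interval V E u v = {x \<in> V. gdist E u x + gdist E x v = gdist E u v}"

definition median_graph :: "'a set \<Rightarrow> ('a \<times> 'a) set \<Rightarrow> bool" where
  "median_graph V E \<longleftrightarrow> simple_connected_graph V E \<and>
     (\<forall>x\<in>V. \<forall>y\<in>V. \<forall>z\<in>V. card (interval V E x y \<inter> interval V E y z \<inter> interval V E z x) = 1)"

definition gated :: "'a set \<Rightarrow> ('a \<times> 'a) set \<Rightarrow> 'a set \<Rightarrow> bool" where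
  "gated V E H \<longleftrightarrow> (\<forall>v\<in>V. \<exists>g\<in>H. \<forall>x\<in>H. g \<in> interval V E v x)"

definition edges :: "('a \<times> 'a) set \<Rightarrow> 'a set set" where
  "edges E = {{u, v} | u v. (u, v) \<in> E}"

definition opposite :: "('a \<times> 'a) set \<Rightarrow> 'a set \<Rightarrow> 'a set \<Rightarrow> bool" where
  "opposite E e f \<longleftrightarrow> (\<exists>a b c d. e = {a, b} \<and> f = {c, d} \<and> distinct [a, b, c, d] \<and>
      (a, b) \<in> E \<and> (b, c) \<in> E \<and> (c, d) \<in> E \<and> (d, a) \<in> E)"

definition theta_classes :: "('a \<times> 'a) set \<Rightarrow> 'a set set set" where
  "theta_classes E = edges E // ({(e, f). opposite E e f}\<^sup>*)"

definition comp_del :: "('a \<times> 'a) set \<Rightarrow> 'a set set \<Rightarrow> 'a \<Rightarrow> 'a set" where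
  "comp_del E C v = {w. (v, w) \<in> {(x, y). (x, y) \<in> E \<and> {x, y} \<notin> C}\<^sup>*}"

definition halfspaces :: "'a set \<Rightarrow> ('a \<times> 'a) set \<Rightarrow> 'a set set \<Rightarrow> 'a set set" where
  "halfspaces V E C = comp_del E C ` V"

definition minority :: "'a set \<Rightarrow> ('a \<times> 'a) set \<Rightarrow> 'a set set \<Rightarrow> 'a set" where
  "minority V E C = (THE H. H \<in> halfspaces V E C \<and>
      (\<forall>K \<in> halfspaces V E C. K \<noteq> H \<longrightarrow> card H < card K))"

definition majority :: "'a set \<Rightarrow> ('a \<times> 'a) set \<Rightarrow> 'a set set \<Rightarrow> 'a set" where
  "majority V E C = V - minority V E C"

definition ladder :: "'a set \<Rightarrow> ('a \<times> 'a) set \<Rightarrow> 'a \<Rightarrow> 'a \<Rightarrow> 'a set set set" where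
  "ladder V E u v = {C \<in> theta_classes E. comp_del E C u \<noteq> comp_del E C v \<and>
      (\<exists>w. (u, w) \<in> E \<and> {u, w} \<in> C)}"

text \<open>Vertex sets of the large sets G_i for the enumeration Es = [E_1, ..., E_l]:
V(G_0) = V, V(G_{i+1}) = V(G_i) - H'_{i+1}.\<close>
fun large_set :: "'a set \<Rightarrow> ('a \<times> 'a) set \<Rightarrow> 'a set set list \<Rightarrow> nat \<Rightarrow> 'a set" where
  "large_set V E Es 0 = V"
| "large_set V E Es (Suc i) = large_set V E Es i - minority V E (Es ! i)"

definition slice :: "'a set \<Rightarrow> ('a \<times> 'a) set \<Rightarrow> 'a set set list \<Rightarrow> nat \<Rightarrow> 'a set" where
  "slice V E Es i = large_set V E Es i - large_set V E Es (Suc i)"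

end

theory Submission
  imports Defs
begin


lemma walk_Nil[simp]: "\<not> walk E []" by (simp add: walk_def)
lemma walk_single[simp]: "walk E [x]" by (simp add: walk_def)
lemma walk_Cons2[simp]: "walk E (x # y # xs) \<longleftrightarrow> (x,y) \<in> E \<and> walk E (y # xs)"
proof
  assume w: "walk E (x # y # xs)"
  then have H: "\<forall>i < length (x # y # xs) - 1. ((x # y # xs) ! i, (x # y # xs) ! Suc i) \<in> E" unfolding walk_def by blast
  have "0 < length (x # y # xs) - 1" by simp
  with H have "((x # y # xs) ! 0, (x # y # xs) ! Suc 0) \<in> E" by blast
  then have "(x,y) \<in> E" by simp
  moreover have "walk E (y # xs)" unfolding walk_def
  proof (intro conjI allI impI)
    fix i assume "i < length (y # xs) - 1"
    then have "Suc i < length (x # y # xs) - 1" by simp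
    then have "((x # y # xs) ! Suc i, (x # y # xs) ! Suc (Suc i)) \<in> E" using w unfolding walk_def by blast
    then show "((y # xs) ! i, (y # xs) ! Suc i) \<in> E" by simp
  qed simp
  ultimately show "(x,y) \<in> E \<and> walk E (y # xs)" by simp
next
  assume h: "(x,y) \<in> E \<and> walk E (y # xs)"
  show "walk E (x # y # xs)" unfolding walk_def
  proof (intro conjI allI impI)
    fix i assume i: "i < length (x # y # xs) - 1"
    show "((x # y # xs) ! i, (x # y # xs) ! Suc i) \<in> E"
    proof (cases i)
      case 0 then show ?thesis using h by simp
    next
      case (Suc j) then show ?thesis using h i unfolding walk_def by simp
    qed
  qed simp
qed

lemma walk_append:
  "walk E p \<Longrightarrow> walk E q \<Longrightarrow> last p = hd q \<Longrightarrow> walk E (p @ tl q)"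
proof (induction p)
  case Nil then show ?case by simp
next
  case (Cons x p)
  show ?case
  proof (cases p)
    case Nil
    then show ?thesis using Cons.prems by (cases q) auto
  next
    case (Cons y ys)
    with Cons.prems Cons.IH show ?thesis by auto
  qed
qed

lemma walk_rev: "sym E \<Longrightarrow> walk E p \<Longrightarrow> walk E (rev p)"
proof (induction p)
  case Nil then show ?case by simp
next
  case (Cons x p)
  show ?case
  proof (cases p)
    case Nil then show ?thesis by simp
  next
    case (Cons y ys)
    with Cons.prems Cons.IH have "walk E (rev p)" "(y,x) \<in> E" by (auto dest: symD)
    then have "walk E (rev p @ tl [y, x])"
      by (intro walk_append) (auto simp: Cons)
    then show ?thesis by simp
  qed
qed

locale mg =
  fixes V :: "'a set" and E :: "('a \<times> 'a) set"
  assumes med: "median_graph V E"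
begin

abbreviation d where "d \<equiv> gdist E"

lemma fin: "finite V" and EV: "E \<subseteq> V \<times> V" and symE: "sym E" and irr: "(v,v) \<notin> E"
  and conn: "u\<in>V \<Longrightarrow> v\<in>V \<Longrightarrow> \<exists>p. walk E p \<and> hd p = u \<and> last p = v"
  using med unfolding median_graph_def simple_connected_graph_def by auto

lemma edgeV: "(u,v) \<in> E \<Longrightarrow> u \<in> V \<and> v \<in> V" using EV by auto

lemma d_walk: assumes "u\<in>V" "v\<in>V"
  shows "\<exists>p. walk E p \<and> hd p = u \<and> last p = v \<and> length p = Suc (d u v)"
proof -
  obtain p where p: "walk E p" "hd p = u" "last p = v" using conn assms by blast
  then have "length p = Suc (length p - 1)" by (cases p) auto
  with p have ex: "\<exists>n. \<exists>p. walk E p \<and> hd p = u \<and> last p = v \<and> length p = Suc n" by blast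
  show ?thesis unfolding gdist_def by (rule LeastI_ex[OF ex])
qed

lemma d_le: assumes "walk E p" "hd p = u" "last p = v" shows "d u v \<le> length p - 1"
proof -
  have "length p = Suc (length p - 1)" using assms by (cases p) auto
  with assms show ?thesis unfolding gdist_def by (intro Least_le) blast
qed

lemma d_refl[simp]: "d u u = 0"
  using d_le[of "[u]" u u] by simp

lemma d_zero: assumes "u\<in>V" "v\<in>V" "d u v = 0" shows "u = v"
proof -
  obtain p where p: "walk E p" "hd p = u" "last p = v" "length p = Suc 0"
    using d_walk[OF assms(1,2)] assms(3) by auto
  then obtain x where "p = [x]" by (cases p) auto
  with p show ?thesis by simp
qed

lemma d_sym: assumes "u\<in>V" "v\<in>V" shows "d u v = d v u"
proof -
  have *: "d x y \<le> d y x" if xV: "x\<in>V" and yV: "y\<in>V" for x y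
  proof -
    obtain p where p: "walk E p" "hd p = y" "last p = x" "length p = Suc (d y x)"
      using d_walk[OF yV xV] by auto
    have "walk E (rev p)" using walk_rev[OF symE p(1)] .
    moreover have "p \<noteq> []" using p by auto
    ultimately have "d x y \<le> length (rev p) - 1"
      using p by (intro d_le) (auto simp: hd_rev last_rev)
    with p show ?thesis by simp
  qed
  show ?thesis using *[OF assms] *[OF assms(2,1)] by simp
qed

lemma d_tri: assumes "u\<in>V" "v\<in>V" "w\<in>V" shows "d u w \<le> d u v + d v w"
proof -
  obtain p where p: "walk E p" "hd p = u" "last p = v" "length p = Suc (d u v)"
    using d_walk[OF assms(1,2)] by auto
  obtain q where q: "walk E q" "hd q = v" "last q = w" "length q = Suc (d v w)"
    using d_walk[OF assms(2,3)] by auto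
  have w: "walk E (p @ tl q)" using walk_append[OF p(1) q(1)] p q by simp
  have "p \<noteq> []" "q \<noteq> []" using p q by auto
  have "last (p @ tl q) = w"
  proof (cases "tl q = []")
    case True
    then have "q = [v]" using q \<open>q \<noteq> []\<close> by (cases q) auto
    then show ?thesis using True p q by simp
  next
    case False
    then show ?thesis using q by (simp add: last_tl)
  qed
  moreover have "hd (p @ tl q) = u" using p \<open>p \<noteq> []\<close> by simp
  ultimately have "hd (p @ tl q) = u" "last (p @ tl q) = w" by auto
  then have "d u w \<le> length (p @ tl q) - 1" using d_le[OF w] by simp
  with p q show ?thesis by simp
qed

lemma d_edge: assumes "(u,v) \<in> E" shows "d u v = 1"
proof -
  have "d u v \<le> 1" using d_le[of "[u,v]" u v] assms by simp
  moreover have "u \<noteq> v" using assms irr by auto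
  then have "d u v \<noteq> 0" using d_zero edgeV[OF assms] by auto
  ultimately show ?thesis by simp
qed

lemma d_step: assumes "u\<in>V" "v\<in>V" "0 < d u v"
  shows "\<exists>w. (u,w) \<in> E \<and> d w v + 1 = d u v"
proof -
  obtain p where p: "walk E p" "hd p = u" "last p = v" "length p = Suc (d u v)"
    using d_walk[OF assms(1,2)] by auto
  obtain w rest where pe: "p = u # w # rest"
  proof (cases p)
    case Nil then show ?thesis using p by simp
  next
    case (Cons x xs)
    then show ?thesis
    proof (cases xs)
      case Nil then show ?thesis using p Cons assms(3) by simp
    next
      case (Cons w rest) then show ?thesis using that p \<open>p = x # xs\<close> by simp
    qed
  qed
  with p have uw: "(u,w) \<in> E" "walk E (w # rest)" by auto
  have "last (w # rest) = v" using p pe by simp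
  then have "d w v \<le> length (w # rest) - 1" using d_le[OF uw(2), of w v] by simp
  then have "d w v + 1 \<le> d u v" using p pe by simp
  moreover have "d u v \<le> d u w + d w v" using d_tri assms edgeV[OF uw(1)] by blast
  ultimately show ?thesis using uw d_edge[OF uw(1)] by auto
qed

lemma d_one: assumes "u\<in>V" "v\<in>V" "d u v = 1" shows "(u,v) \<in> E"
proof -
  obtain w where w: "(u,w) \<in> E" "d w v + 1 = d u v" using d_step[OF assms(1,2)] assms(3) by auto
  then have "w = v" using d_zero edgeV[OF w(1)] assms by auto
  with w show ?thesis by simp
qed

end



context mg begin

definition ismed where
  "ismed x y z m \<longleftrightarrow> m \<in> V \<and> d x m + d m y = d x y \<and> d y m + d m z = d y z \<and> d z m + d m x = d z x"

lemma med_set: "interval V E x y \<inter> interval V E y z \<inter> interval V E z x = {m. ismed x y z m}"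
  unfolding ismed_def interval_def by auto

lemma med_ex: assumes "x\<in>V" "y\<in>V" "z\<in>V" shows "\<exists>m. ismed x y z m"
proof -
  have "card {m. ismed x y z m} = 1" using med assms unfolding median_graph_def med_set by blast
  then show ?thesis by (metis card_1_singletonE mem_Collect_eq singletonI)
qed

lemma med_uniq: assumes "x\<in>V" "y\<in>V" "z\<in>V" "ismed x y z m" "ismed x y z m'" shows "m = m'"
proof -
  have "card {m. ismed x y z m} = 1" using med assms unfolding median_graph_def med_set by blast
  then obtain c where "{m. ismed x y z m} = {c}" by (rule card_1_singletonE)
  then have "m \<in> {c}" "m' \<in> {c}" using assms(4,5) by (metis mem_Collect_eq)+
  then show ?thesis by simp
qed

lemma edge_lip: assumes "(u,w) \<in> E" "x \<in> V" shows "d u x \<le> d w x + 1"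
  using d_tri[of u w x] edgeV[OF assms(1)] assms d_edge[OF assms(1)] by auto

lemma bip: assumes "(a,b) \<in> E" "x \<in> V" shows "d x b = d x a + 1 \<or> d x a = d x b + 1"
proof -
  have aV: "a\<in>V" and bV: "b\<in>V" using edgeV[OF assms(1)] by auto
  obtain m where m: "ismed x a b m" using med_ex[OF assms(2) aV bV] by blast
  have ab1: "d a b = 1" using d_edge[OF assms(1)] .
  have mV: "m \<in> V" using m ismed_def by auto
  have e1: "d a m + d m b = 1" using m ab1 unfolding ismed_def by auto
  show ?thesis
  proof (cases "d a m = 0")
    case True
    then have "m = a" using d_zero[OF aV mV] by simp
    then have "d b a + d a x = d b x" using m unfolding ismed_def by simp
    then show ?thesis using d_sym[OF aV bV] d_sym[OF assms(2) aV] d_sym[OF assms(2) bV] ab1 by simp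
  next
    case False
    then have "d m b = 0" using e1 by simp
    then have "m = b" using d_zero[OF mV bV] by simp
    then have "d x b + d b a = d x a" using m unfolding ismed_def by simp
    then show ?thesis using d_sym[OF aV bV] ab1 by simp
  qed
qed

definition W where "W a b = {x \<in> V. d x a < d x b}"

lemma W_V: "x \<in> W a b \<Longrightarrow> x \<in> V" unfolding W_def by auto

lemma W_dist: assumes "(a,b) \<in> E" "x \<in> W a b" shows "d x b = d x a + 1"
  using bip[OF assms(1) W_V[OF assms(2)]] assms(2) unfolding W_def by auto

lemma notW_dist: assumes "(a,b) \<in> E" "x \<in> V" "x \<notin> W a b" shows "d x a = d x b + 1"
  using bip[OF assms(1,2)] assms unfolding W_def by auto

lemma notW_iff: assumes "(a,b) \<in> E" "x \<in> V" shows "x \<notin> W a b \<longleftrightarrow> x \<in> W b a"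
  using bip[OF assms(1,2)] assms unfolding W_def by auto

lemma GS:
  assumes IH: "\<forall>a b x1 y1 z. (a,b)\<in>E \<longrightarrow> x1\<in>W a b \<longrightarrow> y1 \<in> W a b \<longrightarrow> z\<in>V \<longrightarrow>
      d x1 z + d z y1 = d x1 y1 \<longrightarrow> d x1 y1 < D \<longrightarrow> z \<in> W a b"
    and D: "d x y = D"
    and ab: "(a,b)\<in>E" and xW: "x\<in>W a b" and yW: "y\<in>W a b" and cV: "c\<in>V" and cW: "c\<notin>W a b"
    and c: "d x c + d c y = d x y"
  shows "\<exists>x'. (x,x')\<in>E \<and> x' \<notin> W a b \<and> d x x' + d x' c = d x c"
proof -
  have xV: "x\<in>V" and yV: "y \<in> V" using xW yW W_V by auto
  let ?S = "{z'\<in>V. d x z' + d z' c = d x c \<and> z' \<notin> W a b}"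
  have "c \<in> ?S" using cV cW by simp
  then obtain z' where z': "z' \<in> ?S" and zmin: "\<And>z''. z'' \<in> ?S \<Longrightarrow> d x z' \<le> d x z''"
    using ex_has_least_nat[of "\<lambda>z. z \<in> ?S" c "\<lambda>z. d x z"] by blast
  have z'V: "z' \<in> V" using z' by simp
  have "z' \<noteq> x" using z' xW by auto
  then have pos: "0 < d x z'" using d_zero[OF xV z'V] by auto
  have one: "d x z' = 1"
  proof (rule ccontr)
    assume "d x z' \<noteq> 1"
    then have ge2: "2 \<le> d x z'" using pos by simp
    have "0 < d z' x" using pos d_sym[OF xV z'V] by simp
    then obtain u where u: "(z',u) \<in> E" "d u x + 1 = d z' x" using d_step[OF z'V xV] by blast
    have uV: "u\<in>V" using edgeV[OF u(1)] by simp
    have dux: "d x u + 1 = d x z'" using u(2) d_sym[OF xV z'V] d_sym[OF xV uV] by simp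
    have duz: "d u z' = 1" using d_edge[OF u(1)] d_sym[OF uV z'V] by simp
    have t1: "d u c \<le> d u z' + d z' c" using d_tri[OF uV z'V cV] .
    have t2: "d x c \<le> d x u + d u c" using d_tri[OF xV uV cV] .
    have uc: "d x u + d u c = d x c" using t1 t2 dux duz z' by simp
    have "u \<notin> ?S"
    proof
      assume "u \<in> ?S" then have "d x z' \<le> d x u" using zmin by blast
      with dux show False by simp
    qed
    then have uW: "u \<in> W a b" using uV uc by simp
    have t3: "d u y \<le> d u z' + d z' y" using d_tri[OF uV z'V yV] .
    have t4: "d z' y \<le> d z' c + d c y" using d_tri[OF z'V cV yV] .
    have t5: "d x y \<le> d x u + d u y" using d_tri[OF xV uV yV] .
    have zc: "d x z' + d z' c = d x c" using z' by simp
    have e1: "d u z' + d z' y = d u y" using t3 t4 t5 c zc dux duz by linarith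
    have e2: "d u y < D" using t3 t4 t5 c zc dux duz D ge2 by linarith
    have "z' \<in> W a b" using IH ab uW yW z'V e1 e2 by blast
    with z' show False by simp
  qed
  have "(x,z') \<in> E" using d_one[OF xV z'V one] .
  then show ?thesis using z' by blast
qed

lemma conv_W_aux:
  "\<And>a b x y z. (a,b)\<in>E \<Longrightarrow> x\<in>W a b \<Longrightarrow> y \<in> W a b \<Longrightarrow> z\<in>V \<Longrightarrow>
      d x z + d z y = d x y \<Longrightarrow> d x y < D \<Longrightarrow> z \<in> W a b"
proof (induction D rule: less_induct)
  case (less D)
  fix a b x y z
  assume ab: "(a,b)\<in>E" and xW: "x\<in>W a b" and yW: "y \<in> W a b" and zV: "z\<in>V"
    and z: "d x z + d z y = d x y" and DD: "d x y < D"
  have IH: "\<And>a b x1 y1 z. (a,b)\<in>E \<Longrightarrow> x1\<in>W a b \<Longrightarrow> y1 \<in> W a b \<Longrightarrow> z\<in>V \<Longrightarrow>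
      d x1 z + d z y1 = d x1 y1 \<Longrightarrow> d x1 y1 < d x y \<Longrightarrow> z \<in> W a b"
    using less.IH[OF DD] by blast
  have xV: "x\<in>V" and yV: "y \<in> V" using xW yW W_V by auto
  have aV: "a\<in>V" and bV: "b\<in>V" using edgeV[OF ab] by auto
  have ba: "(b,a) \<in> E" using ab symE by (auto dest: symD)
  show "z \<in> W a b"
  proof (rule ccontr)
    assume zW: "z \<notin> W a b"
    obtain x' where x': "(x,x')\<in>E" "x' \<notin> W a b" "d x x' + d x' z = d x z"
      using GS[where D="d x y", OF _ refl ab xW yW zV zW z] IH by blast
    have x'V: "x' \<in> V" using edgeV[OF x'(1)] by simp
    have xx': "d x x' = 1" using d_edge[OF x'(1)] .
    have "d x' y \<le> d x' z + d z y" using d_tri[OF x'V zV yV] .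
    moreover have "d x y \<le> d x x' + d x' y" using d_tri[OF xV x'V yV] .
    ultimately have x'y: "d x x' + d x' y = d x y" using x'(3) z by linarith
    have IH2: "\<And>a b x1 y1 z. (a,b)\<in>E \<Longrightarrow> x1\<in>W a b \<Longrightarrow> y1 \<in> W a b \<Longrightarrow> z\<in>V \<Longrightarrow>
      d x1 z + d z y1 = d x1 y1 \<Longrightarrow> d x1 y1 < d y x \<Longrightarrow> z \<in> W a b"
      using IH d_sym[OF xV yV] by metis
    have c2: "d y x' + d x' x = d y x"
      using x'y d_sym[OF xV yV] d_sym[OF xV x'V] d_sym[OF x'V yV] by simp
    obtain y' where y': "(y,y')\<in>E" "y' \<notin> W a b" "d y y' + d y' x' = d y x'"
      using GS[where D="d y x", OF _ refl ab yW xW x'V x'(2) c2] IH2 by blast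
    have y'V: "y' \<in> V" using edgeV[OF y'(1)] by simp
    have yy': "d y y' = 1" using d_edge[OF y'(1)] .
    have dx'y': "d x' y' + 2 = d x y"
      using y'(3) yy' x'y xx' d_sym[OF x'V y'V] d_sym[OF x'V yV] by simp
    have xb: "d x b = d x a + 1" using W_dist[OF ab xW] .
    have yb: "d y b = d y a + 1" using W_dist[OF ab yW] .
    have x'a: "d x' a = d x' b + 1" using notW_dist[OF ab x'V x'(2)] .
    have y'a: "d y' a = d y' b + 1" using notW_dist[OF ab y'V y'(2)] .
    have x'b: "d x' b = d x a"
      using edge_lip[OF x'(1) bV] edge_lip[OF x'(1) aV] xb x'a
        edge_lip[of x' x b] edge_lip[of x' x a] x'(1) symE xV aV bV
      by (metis (no_types, lifting) add_le_cancel_right le_antisym symD)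
    have y'b: "d y' b = d y a"
      using edge_lip[OF y'(1) bV] edge_lip[OF y'(1) aV] yb y'a
        edge_lip[of y' y b] edge_lip[of y' y a] y'(1) symE yV aV bV
      by (metis (no_types, lifting) add_le_cancel_right le_antisym symD)
    obtain n where n: "ismed x y a n" using med_ex[OF xV yV aV] by blast
    obtain m where m: "ismed x' y' b m" using med_ex[OF x'V y'V bV] by blast
    have nV: "n \<in> V" and mV: "m \<in> V" using n m ismed_def by auto
    have n1: "d x n + d n y = d x y" and n2: "d y n + d n a = d y a" and n3: "d a n + d n x = d a x"
      using n ismed_def by auto
    have m1: "d x' m + d m y' = d x' y'" and m2: "d y' m + d m b = d y' b" and m3: "d b m + d m x' = d b x'"
      using m ismed_def by auto
    have sym_all: "\<And>u v. u \<in> {x,y,x',y',a,b,n,m} \<Longrightarrow> v \<in> {x,y,x',y',a,b,n,m} \<Longrightarrow> d u v = d v u"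
      using d_sym xV yV x'V y'V aV bV nV mV by auto
    have nmed: "ismed x y b n"
    proof -
      have "d n b \<le> d n a + d a b" using d_tri[OF nV aV bV] .
      moreover have "d y b \<le> d y n + d n b" using d_tri[OF yV nV bV] .
      moreover have "d x b \<le> d x n + d n b" using d_tri[OF xV nV bV] .
      ultimately show ?thesis unfolding ismed_def using nV n1 n2 n3 d_edge[OF ab] xb yb
          sym_all[of b n] sym_all[of n x] sym_all[of a x] sym_all[of b x] sym_all[of a n] by auto
    qed
    have mmed: "ismed x y b m"
    proof -
      have t1: "d x m \<le> d x x' + d x' m" using d_tri[OF xV x'V mV] .
      have t2: "d m y \<le> d m y' + d y' y" using d_tri[OF mV y'V yV] .
      have t3: "d x y \<le> d x m + d m y" using d_tri[OF xV mV yV] .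
      have t4: "d y m \<le> d y y' + d y' m" using d_tri[OF yV y'V mV] .
      have t5: "d y b \<le> d y m + d m b" using d_tri[OF yV mV bV] .
      have t6: "d m x \<le> d m x' + d x' x" using d_tri[OF mV x'V xV] .
      have t7: "d b x \<le> d b m + d m x" using d_tri[OF bV mV xV] .
      have s: "d y' y = 1" "d x' x = 1" "d b x' = d x' b" "d b x = d x b"
        using sym_all[of y' y] sym_all[of x' x] sym_all[of b x'] sym_all[of b x] yy' xx' by auto
      show ?thesis unfolding ismed_def using mV m1 m2 m3 t1 t2 t3 t4 t5 t6 t7 s xx' yy' dx'y' x'b y'b xb yb
        by linarith
    qed
    have "n = m" using med_uniq[OF xV yV bV nmed mmed] .
    have "d n b = d n a + 1"
      using nmed n3 xb sym_all[of b n] sym_all[of n x] sym_all[of a x] sym_all[of b x] sym_all[of a n]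
      unfolding ismed_def by auto
    moreover have "n \<in> W b a"
    proof (rule IH[OF ba])
      show "x' \<in> W b a" using notW_iff[OF ab x'V] x'(2) by simp
      show "y' \<in> W b a" using notW_iff[OF ab y'V] y'(2) by simp
      show "n \<in> V" by (rule nV)
      show "d x' n + d n y' = d x' y'" using m1 \<open>n = m\<close> by simp
      show "d x' y' < d x y" using dx'y' by simp
    qed
    ultimately show False unfolding W_def by simp
  qed
qed

lemma conv_W: "(a,b)\<in>E \<Longrightarrow> x\<in>W a b \<Longrightarrow> y \<in> W a b \<Longrightarrow> z\<in>V \<Longrightarrow>
      d x z + d z y = d x y \<Longrightarrow> z \<in> W a b"
  using conv_W_aux[of a b x y z "Suc (d x y)"] by simp

end



context mg begin

definition R where "R = {(e,f). opposite E e f}\<^sup>*"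
definition F where "F a b = {{u,v} | u v. (u,v)\<in>E \<and> u\<in>W a b \<and> v\<notin>W a b}"
definition convex where "convex S \<longleftrightarrow> S \<subseteq> V \<and> (\<forall>x\<in>S. \<forall>y\<in>S. \<forall>z\<in>V. d x z + d z y = d x y \<longrightarrow> z\<in>S)"

lemma symD': "(x,y) \<in> E \<Longrightarrow> (y,x) \<in> E" using symE by (auto dest: symD)

lemma two_nbrs: assumes ab: "(a,b)\<in>E" and x: "x\<in>W a b" and y: "y\<in>W a b" and xy: "x\<noteq>y"
  and px: "(p,x)\<in>E" and py: "(p,y)\<in>E" shows "p \<in> W a b"
proof -
  have xV: "x\<in>V" and yV: "y\<in>V" and pV: "p\<in>V" using x y W_V edgeV[OF px] by auto
  have dxp: "d x p = 1" using d_edge[OF symD'[OF px]] .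
  have dpy: "d p y = 1" using d_edge[OF py] .
  have dpx: "d p x = 1" using d_edge[OF px] .
  have le: "d x y \<le> 2" using d_tri[OF xV pV yV] dxp dpy by simp
  have n0: "d x y \<noteq> 0" using d_zero[OF xV yV] xy by auto
  have n1: "d x y \<noteq> 1"
  proof
    assume "d x y = 1"
    then have "(x,y) \<in> E" using d_one[OF xV yV] by simp
    from bip[OF this pV] dpx dpy show False by simp
  qed
  have "d x y = 2" using le n0 n1 by simp
  then have "d x p + d p y = d x y" using dxp dpy by simp
  then show ?thesis using conv_W[OF ab x y pV] by simp
qed

lemma opp_sym: assumes "opposite E e f" shows "opposite E f e"
proof -
  obtain p q c r where o': "e = {p,q}" "f = {c,r}" "distinct [p,q,c,r]"
    "(p,q)\<in>E" "(q,c)\<in>E" "(c,r)\<in>E" "(r,p)\<in>E" using assms unfolding opposite_def by blast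
  have dd: "distinct [c,r,p,q]" using o'(3) by auto
  show ?thesis unfolding opposite_def
    by (rule exI[of _ c], rule exI[of _ r], rule exI[of _ p], rule exI[of _ q]) (simp add: o', use o'(3) in auto)
qed

lemma opp_F: assumes ab: "(a,b)\<in>E" and e: "e \<in> F a b" and o: "opposite E e f" shows "f \<in> F a b"
proof -
  obtain p q c r where o': "e = {p,q}" "f = {c,r}" "distinct [p,q,c,r]"
    "(p,q)\<in>E" "(q,c)\<in>E" "(c,r)\<in>E" "(r,p)\<in>E" using o unfolding opposite_def by blast
  obtain u v where uv: "e = {u,v}" "(u,v)\<in>E" "u\<in>W a b" "v\<notin>W a b" using e unfolding F_def by blast
  have ba: "(b,a)\<in>E" using symD'[OF ab] .
  have V4: "p\<in>V" "q\<in>V" "c\<in>V" "r\<in>V" using edgeV o' by blast+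
  have "(p = u \<and> q = v) \<or> (p = v \<and> q = u)" using uv(1) o'(1) by (auto simp: doubleton_eq_iff)
  then show ?thesis
  proof
    assume h: "p = u \<and> q = v"
    have rW: "r \<in> W a b"
    proof (rule ccontr)
      assume "r \<notin> W a b"
      then have "r \<in> W b a" "q \<in> W b a" using notW_iff[OF ab] V4 h uv by auto
      then have "p \<in> W b a" using two_nbrs[OF ba, of q r p] o' symD' by auto
      then show False using notW_iff[OF ab] V4 h uv by auto
    qed
    have cW: "c \<notin> W a b"
    proof
      assume "c \<in> W a b"
      then have "q \<in> W a b" using two_nbrs[OF ab, of p c q] o' symD' h uv by auto
      then show False using h uv by simp
    qed
    have "f = {r,c}" using o' by auto
    then show ?thesis unfolding F_def using rW cW symD'[OF o'(6)] by blast
  next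
    assume h: "p = v \<and> q = u"
    have cW: "c \<in> W a b"
    proof (rule ccontr)
      assume "c \<notin> W a b"
      then have "c \<in> W b a" "p \<in> W b a" using notW_iff[OF ab] V4 h uv by auto
      then have "q \<in> W b a" using two_nbrs[OF ba, of p c q] o' symD' by auto
      then show False using notW_iff[OF ab] V4 h uv by auto
    qed
    have rW: "r \<notin> W a b"
    proof
      assume "r \<in> W a b"
      then have "p \<in> W a b" using two_nbrs[OF ab, of q r p] o' symD' h uv by auto
      then show False using h uv by simp
    qed
    then show ?thesis unfolding F_def using rW cW o' by blast
  qed
qed

lemma ab_F: assumes ab: "(a,b)\<in>E" shows "{a,b} \<in> F a b"
proof -
  have "a \<in> W a b" "b \<notin> W a b" using edgeV[OF ab] d_edge[OF ab] d_edge[OF symD'[OF ab]]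
    unfolding W_def by auto
  then show ?thesis unfolding F_def using ab by blast
qed

lemma R_F: assumes ab: "(a,b)\<in>E" and r: "({a,b},f) \<in> R" shows "f \<in> F a b"
  using r unfolding R_def
proof (induction rule: rtrancl_induct)
  case base then show ?case using ab_F[OF ab] .
next
  case (step y z) then show ?case using opp_F[OF ab] by auto
qed

lemma F_R: assumes ab: "(a,b)\<in>E"
  shows "(u,v)\<in>E \<Longrightarrow> u\<in>W a b \<Longrightarrow> v\<notin>W a b \<Longrightarrow> ({a,b},{u,v}) \<in> R"
proof (induction "d u a" arbitrary: u v)
  case 0
  have aV: "a\<in>V" and bV: "b\<in>V" using edgeV[OF ab] by auto
  have uV: "u \<in> V" and vV: "v\<in>V" using edgeV[OF "0.prems"(1)] by auto
  have "u = a" using d_zero[OF uV aV] "0.hyps" by simp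
  have ba: "(b,a)\<in>E" using symD'[OF ab] .
  have "v = b"
  proof (rule ccontr)
    assume "v \<noteq> b"
    have "v \<in> W b a" using notW_iff[OF ab vV] "0.prems" by simp
    moreover have "b \<in> W b a" using bV d_edge[OF ba] unfolding W_def by simp
    ultimately have "a \<in> W b a" using two_nbrs[OF ba _ _ \<open>v\<noteq>b\<close>, of a] "0.prems"(1) \<open>u = a\<close> ab by auto
    moreover have "a \<in> W a b" using "0.prems" \<open>u=a\<close> by simp
    ultimately show False unfolding W_def by simp
  qed
  then show ?case using \<open>u = a\<close> unfolding R_def by simp
next
  case (Suc k)
  have aV: "a\<in>V" and bV: "b\<in>V" using edgeV[OF ab] by auto
  have uV: "u \<in> V" and vV: "v\<in>V" using edgeV[OF Suc.prems(1)] by auto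
  have ba: "(b,a)\<in>E" using symD'[OF ab] .
  obtain u' where u': "(u,u')\<in>E" "d u' a + 1 = d u a" using d_step[OF uV aV] Suc.hyps(2) by auto
  have u'V: "u' \<in> V" using edgeV[OF u'(1)] by simp
  have aW: "a \<in> W a b" using aV d_edge[OF ab] unfolding W_def by simp
  have u'W: "u' \<in> W a b"
    using conv_W[OF ab Suc.prems(2) aW u'V] d_edge[OF u'(1)] u'(2) by simp
  have dub: "d u b = d u a + 1" using W_dist[OF ab Suc.prems(2)] .
  have dva: "d v a = d v b + 1" using notW_dist[OF ab vV Suc.prems(3)] .
  have "d v b = k + 1" using edge_lip[OF Suc.prems(1) bV] edge_lip[OF symD'[OF Suc.prems(1)] aV] dub dva Suc.hyps(2) by simp
  have "d u' b = k + 1" using W_dist[OF ab u'W] u'(2) Suc.hyps(2) by simp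
  have "u' \<noteq> v" using u'W Suc.prems(3) by auto
  have duu': "d u u' = 1" "d u v = 1" using d_edge u'(1) Suc.prems(1) by auto
  have du'v: "d u' v = 2"
  proof -
    have "d u' v \<le> d u' u + d u v" using d_tri[OF u'V uV vV] .
    moreover have "d u' u = 1" using d_edge[OF symD'[OF u'(1)]] .
    moreover have "d u' v \<noteq> 0" using d_zero[OF u'V vV] \<open>u' \<noteq> v\<close> by auto
    moreover have "d u' v \<noteq> 1"
    proof
      assume "d u' v = 1"
      then have "(u',v) \<in> E" using d_one[OF u'V vV] by simp
      from bip[OF this uV] duu' show False by simp
    qed
    ultimately show ?thesis using duu' by linarith
  qed
  obtain m where m: "ismed u' v b m" using med_ex[OF u'V vV bV] by blast
  have mV: "m\<in>V" using m ismed_def by auto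
  have m1: "d u' m + d m v = d u' v" and m2: "d v m + d m b = d v b" and m3: "d b m + d m u' = d b u'"
    using m ismed_def by auto
  have s: "d m v = d v m" "d b m = d m b" "d b u' = d u' b" "d m u' = d u' m"
    using d_sym mV vV bV u'V by auto
  have dmb: "d m b = k" and du'm: "d u' m = 1" and dvm: "d v m = 1"
    using m1 m2 m3 s du'v \<open>d v b = k + 1\<close> \<open>d u' b = k + 1\<close> by linarith+
  have e1: "(u',m) \<in> E" using d_one[OF u'V mV du'm] .
  have e2: "(v,m) \<in> E" using d_one[OF vV mV dvm] .
  have bWb: "b \<in> W b a" using bV d_edge[OF ba] unfolding W_def by simp
  have vWb: "v \<in> W b a" using notW_iff[OF ab vV] Suc.prems(3) by simp
  have "m \<in> W b a" using conv_W[OF ba vWb bWb mV m2] .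
  then have mW: "m \<notin> W a b" using notW_iff[OF ab mV] by simp
  have IH: "({a,b},{u',m}) \<in> R" using Suc.hyps(1)[of u' m] u'(2) Suc.hyps(2) e1 u'W mW by simp
  have ne: "u' \<noteq> m" "u' \<noteq> u" "m \<noteq> v" "m \<noteq> u" "v \<noteq> u"
    using u'W mW Suc.prems(2) irr e2 u'(1) Suc.prems(1) by auto
  have dst: "distinct [u',m,v,u]" using ne \<open>u' \<noteq> v\<close> by auto
  have "opposite E {u',m} {v,u}"
    unfolding opposite_def
    using e1 symD'[OF e2] symD'[OF Suc.prems(1)] u'(1) dst
    by (intro exI[of _ u'] exI[of _ m] exI[of _ v] exI[of _ u]) simp
  then have "({u',m},{u,v}) \<in> {(e,f). opposite E e f}" by (simp add: insert_commute)
  then show ?case using IH unfolding R_def by (rule rtrancl_into_rtrancl[rotated])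
qed

lemma theta_F: assumes "C \<in> theta_classes E"
  shows "\<exists>a b. (a,b)\<in>E \<and> C = F a b \<and> C = R``{{a,b}}"
proof -
  obtain x where x: "C = R``{x}" "x \<in> edges E"
    using assms unfolding theta_classes_def R_def by (auto elim: quotientE)
  then obtain a b where ab: "x = {a,b}" "(a,b)\<in>E" unfolding edges_def by blast
  have "C = F a b"
  proof
    show "C \<subseteq> F a b" using R_F[OF ab(2)] x ab by auto
    show "F a b \<subseteq> C"
    proof
      fix f assume "f \<in> F a b"
      then obtain u v where "f = {u,v}" "(u,v)\<in>E" "u\<in>W a b" "v\<notin>W a b" unfolding F_def by blast
      then show "f \<in> C" using F_R[OF ab(2)] x ab by auto
    qed
  qed
  then show ?thesis using ab x by blast
qed

end



context mg begin

lemma convex_V: "convex S \<Longrightarrow> x\<in>S \<Longrightarrow> x\<in>V" unfolding convex_def by blast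
lemma convex_I: "convex S \<Longrightarrow> x\<in>S \<Longrightarrow> y\<in>S \<Longrightarrow> z\<in>V \<Longrightarrow> d x z + d z y = d x y \<Longrightarrow> z\<in>S"
  unfolding convex_def by blast

lemma conv_Wab: assumes "(a,b)\<in>E" shows "convex (W a b)"
  unfolding convex_def using conv_W[OF assms] W_V by blast

lemma conv_connect: assumes S: "convex S"
  shows "v\<in>S \<Longrightarrow> w\<in>S \<Longrightarrow> (v,w) \<in> {(x,y). (x,y)\<in>E \<and> x\<in>S \<and> y\<in>S}\<^sup>*"
proof (induction "d v w" arbitrary: v)
  case 0
  have vV: "v \<in> V" and wV: "w \<in> V" using convex_V[OF S] "0.prems" by auto
  have "v = w" using d_zero[OF vV wV] "0.hyps" by simp
  then show ?case by simp
next
  case (Suc k)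
  have vV: "v \<in> V" and wV: "w \<in> V" using convex_V[OF S] Suc.prems by auto
  obtain u where u: "(v,u)\<in>E" "d u w + 1 = d v w" using d_step[OF vV wV] Suc.hyps(2) by auto
  have uV: "u\<in>V" using edgeV[OF u(1)] by simp
  have "u \<in> S" using convex_I[OF S Suc.prems(1,2) uV] u d_edge[OF u(1)] by simp
  then have uw: "(u,w) \<in> {(x,y). (x,y)\<in>E \<and> x\<in>S \<and> y\<in>S}\<^sup>*" using Suc.hyps(1)[of u] u Suc.hyps(2) Suc.prems by simp
  have "(v,u) \<in> {(x,y). (x,y)\<in>E \<and> x\<in>S \<and> y\<in>S}" using u(1) \<open>u\<in>S\<close> Suc.prems by simp
  from this uw
  show ?case by (rule converse_rtrancl_into_rtrancl)
qed

lemma notF: assumes "(x \<in> W a b \<longleftrightarrow> y \<in> W a b)" shows "{x,y} \<notin> F a b"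
proof
  assume "{x,y} \<in> F a b"
  then obtain u v where "{x,y} = {u,v}" "u\<in>W a b" "v\<notin>W a b" unfolding F_def by blast
  then show False using assms by (auto simp: doubleton_eq_iff)
qed

lemma comp_side: assumes ab: "(a,b)\<in>E" and vV: "v\<in>V"
  shows "comp_del E (F a b) v = {w\<in>V. w\<in>W a b \<longleftrightarrow> v\<in>W a b}"
proof
  show "comp_del E (F a b) v \<subseteq> {w\<in>V. w\<in>W a b \<longleftrightarrow> v\<in>W a b}"
  proof
    fix w assume "w \<in> comp_del E (F a b) v"
    then have "(v,w) \<in> {(x, y). (x, y) \<in> E \<and> {x, y} \<notin> F a b}\<^sup>*" unfolding comp_del_def by simp
    then show "w \<in> {w\<in>V. w\<in>W a b \<longleftrightarrow> v\<in>W a b}"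
    proof (induction rule: rtrancl_induct)
      case base then show ?case using vV by simp
    next
      case (step y z)
      then have yz: "(y,z)\<in>E" "{y,z} \<notin> F a b" by auto
      have "y \<in> W a b \<longleftrightarrow> z \<in> W a b"
      proof (rule ccontr)
        assume "\<not> (y \<in> W a b \<longleftrightarrow> z \<in> W a b)"
        then have "{y,z} \<in> F a b" unfolding F_def using yz(1) symD'[OF yz(1)]
          by (cases "y \<in> W a b") (auto simp: insert_commute)
        with yz show False by simp
      qed
      then show ?case using step edgeV[OF yz(1)] by auto
    qed
  qed
next
  show "{w\<in>V. w\<in>W a b \<longleftrightarrow> v\<in>W a b} \<subseteq> comp_del E (F a b) v"
  proof
    fix w assume w: "w \<in> {w\<in>V. w\<in>W a b \<longleftrightarrow> v\<in>W a b}"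
    have ba: "(b,a)\<in>E" using symD'[OF ab] .
    have sub: "\<And>S. (S = W a b \<or> S = W b a) \<Longrightarrow>
      {(x,y). (x,y)\<in>E \<and> x\<in>S \<and> y\<in>S} \<subseteq> {(x, y). (x, y) \<in> E \<and> {x, y} \<notin> F a b}"
    proof -
      fix S assume S: "S = W a b \<or> S = W b a"
      show "{(x,y). (x,y)\<in>E \<and> x\<in>S \<and> y\<in>S} \<subseteq> {(x, y). (x, y) \<in> E \<and> {x, y} \<notin> F a b}"
      proof clarify
        fix x y assume h: "(x,y)\<in>E" "x\<in>S" "y\<in>S" "{x,y} \<in> F a b"
        have "x \<in> W a b \<longleftrightarrow> y \<in> W a b"
          using S h notW_iff[OF ab] edgeV[OF h(1)] by auto
        then show False using notF h(4) by blast
      qed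
    qed
    show "w \<in> comp_del E (F a b) v"
    proof (cases "v \<in> W a b")
      case True
      then have "(v,w) \<in> {(x,y). (x,y)\<in>E \<and> x\<in>W a b \<and> y\<in>W a b}\<^sup>*"
        using conv_connect[OF conv_Wab[OF ab]] w by simp
      then show ?thesis unfolding comp_del_def using rtrancl_mono[OF sub[of "W a b"]] by auto
    next
      case False
      then have "v \<in> W b a" "w \<in> W b a" using notW_iff[OF ab] w vV by auto
      then have "(v,w) \<in> {(x,y). (x,y)\<in>E \<and> x\<in>W b a \<and> y\<in>W b a}\<^sup>*"
        using conv_connect[OF conv_Wab[OF ba]] by simp
      then show ?thesis unfolding comp_del_def using rtrancl_mono[OF sub[of "W b a"]] by auto
    qed
  qed
qed

lemma hs: assumes ab: "(a,b)\<in>E" shows "halfspaces V E (F a b) = {W a b, W b a}"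
proof -
  have c1: "\<And>v. v\<in>V \<Longrightarrow> v \<in> W a b \<Longrightarrow> comp_del E (F a b) v = W a b"
    using comp_side[OF ab] W_V by auto
  have wba: "{w\<in>V. w \<notin> W a b} = W b a" using notW_iff[OF ab] W_V by blast
  have c2: "\<And>v. v\<in>V \<Longrightarrow> v \<notin> W a b \<Longrightarrow> comp_del E (F a b) v = W b a"
    using comp_side[OF ab] wba by auto
  have aW: "a \<in> W a b" and aV: "a\<in>V" using edgeV[OF ab] d_edge[OF ab] unfolding W_def by auto
  have bW: "b \<notin> W a b" and bV: "b\<in>V" using edgeV[OF ab] d_edge[OF symD'[OF ab]] unfolding W_def by auto
  show ?thesis unfolding halfspaces_def
  proof
    show "comp_del E (F a b) ` V \<subseteq> {W a b, W b a}" using c1 c2 by blast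
    show "{W a b, W b a} \<subseteq> comp_del E (F a b) ` V"
      using c1[OF aV aW] c2[OF bV bW] aV bV by (metis empty_subsetI image_eqI insert_subset)
  qed
qed

lemma F_sym: assumes ab: "(a,b)\<in>E" shows "F b a = F a b"
proof -
  have "\<And>a b. (a,b)\<in>E \<Longrightarrow> F b a \<subseteq> F a b"
  proof
    fix a b f assume ab: "(a,b)\<in>E" and "f \<in> F b a"
    then obtain u v where uv: "f = {u,v}" "(u,v)\<in>E" "u\<in>W b a" "v\<notin>W b a" unfolding F_def by blast
    have "u \<notin> W a b" "v \<in> W a b" using uv notW_iff[OF ab] edgeV[OF uv(2)] by auto
    then show "f \<in> F a b" unfolding F_def using uv symD'[OF uv(2)] by (auto simp: insert_commute)
  qed
  then show ?thesis using ab symD'[OF ab] by blast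
qed

lemma part: assumes ab: "(a,b)\<in>E" shows "W a b \<inter> W b a = {}" "W a b \<union> W b a = V"
  using notW_iff[OF ab] W_V by blast+

lemma minority_eq: assumes "halfspaces V E C = {A,B}" "card A < card B" shows "minority V E C = A"
  unfolding minority_def assms(1)
proof (rule the_equality)
  show "A \<in> {A, B} \<and> (\<forall>K\<in>{A, B}. K \<noteq> A \<longrightarrow> card A < card K)" using assms(2) by auto
  fix H assume "H \<in> {A, B} \<and> (\<forall>K\<in>{A, B}. K \<noteq> H \<longrightarrow> card H < card K)"
  then show "H = A" using assms(2) by auto
qed

lemma class_min:
  assumes C: "C \<in> theta_classes E" and n3: "card V \<ge> 3"
    and sm: "real (Min (card ` halfspaces V E C)) < real (card V) / (2 * ln (real (card V)))"
  shows "\<exists>a b. (a,b)\<in>E \<and> C = F a b \<and> C = R``{{a,b}} \<and> minority V E C = W a b"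
proof -
  obtain a b where ab: "(a,b)\<in>E" "C = F a b" "C = R``{{a,b}}" using theta_F[OF C] by blast
  have h: "halfspaces V E C = {W a b, W b a}" using hs[OF ab(1)] ab(2) by simp
  have fW: "finite (W a b)" "finite (W b a)" using fin W_V by (meson rev_finite_subset subsetI)+
  have sum: "card (W a b) + card (W b a) = card V"
    using card_Un_disjoint[OF fW part(1)[OF ab(1)]] part(2)[OF ab(1)] by simp
  have mn: "Min (card ` halfspaces V E C) = min (card (W a b)) (card (W b a))" using h by simp
  have n: "real (card V) \<ge> 3" using n3 by simp
  have "1 \<le> ln (real (card V))" using ln_ge_iff[of "real (card V)" 1] exp_le n by simp
  then have "real (card V) / (2 * ln (real (card V))) \<le> real (card V) / 2"
    using n by (intro divide_left_mono) auto
  then have "2 * min (card (W a b)) (card (W b a)) < card V" using sm mn by linarith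
  then consider "card (W a b) < card (W b a)" | "card (W b a) < card (W a b)" using sum by linarith
  then show ?thesis
  proof cases
    case 1 then show ?thesis using ab minority_eq[OF h] by blast
  next
    case 2
    have h2: "halfspaces V E C = {W b a, W a b}" using h by auto
    have "minority V E C = W b a" using minority_eq[OF h2 2] .
    moreover have "C = F b a" using F_sym[OF ab(1)] ab by simp
    moreover have "C = R``{{b,a}}" using ab by (simp add: insert_commute)
    ultimately show ?thesis using symD'[OF ab(1)] by blast
  qed
qed

lemma R_sym: assumes "(x,y) \<in> R" shows "(y,x) \<in> R"
proof -
  have c: "{(e,f). opposite E e f}\<inverse> = {(e,f). opposite E e f}" using opp_sym by auto
  have "(x,y) \<in> ({(e,f). opposite E e f}\<inverse>)\<^sup>*" using assms c unfolding R_def by simp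
  then show ?thesis unfolding R_def by (rule rtrancl_converseD)
qed

lemma R_trans: "(x,y) \<in> R \<Longrightarrow> (y,z) \<in> R \<Longrightarrow> (x,z) \<in> R"
  unfolding R_def by (rule rtrancl_trans)

lemma gated_conv: assumes H: "convex H" "H \<noteq> {}" shows "gated V E H"
  unfolding gated_def
proof
  fix v assume vV: "v \<in> V"
  have HV: "H \<subseteq> V" using convex_V[OF H(1)] by auto
  have fH: "finite H" using fin HV by (rule rev_finite_subset)
  let ?k = "Min ((d v) ` H)"
  have "?k \<in> (d v) ` H" using fH H(2) by (intro Min_in) auto
  then obtain g where g: "g \<in> H" "d v g = ?k" by auto
  have gmin: "\<And>h. h \<in> H \<Longrightarrow> d v g \<le> d v h" using g fH by auto
  show "\<exists>g\<in>H. \<forall>x\<in>H. g \<in> interval V E v x"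
  proof (intro bexI[OF _ g(1)] ballI)
    fix x assume x: "x \<in> H"
    have gV: "g \<in> V" and xV: "x \<in> V" using HV g x by auto
    obtain m where m: "ismed v g x m" using med_ex[OF vV gV xV] by blast
    have mV: "m \<in> V" and m1: "d v m + d m g = d v g" and m2: "d g m + d m x = d g x"
      and m3: "d x m + d m v = d x v" using m unfolding ismed_def by auto
    have "m \<in> H" using convex_I[OF H(1) g(1) x mV m2] .
    then have "d v g \<le> d v m" using gmin by blast
    then have "d m g = 0" using m1 by simp
    then have "m = g" using d_zero[OF mV gV] by simp
    then have "d v g + d g x = d v x" using m3 d_sym vV gV xV by auto
    then show "g \<in> interval V E v x" unfolding interval_def using gV by simp
  qed
qed

end



lemma large_set_eq: "large_set V E Es i = V - (\<Union>j<i. minority V E (Es ! j))"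
  by (induction i) (auto simp: lessThan_Suc)

theorem mainTheorem8:
  fixes V :: "'a set" and E :: "('a \<times> 'a) set" and \<omega> :: "'a \<Rightarrow> nat"
    and v0 umax :: 'a and Es :: "'a set set list"
  assumes median: "median_graph V E"
    and n3: "card V \<ge> 3"
    and small: "\<forall>C \<in> theta_classes E.
       real (Min (card ` halfspaces V E C)) < real (card V) / (2 * ln (real (card V)))"
    and v0: "v0 \<in> V" "\<forall>C \<in> theta_classes E. v0 \<in> majority V E C"
    and umax: "umax \<in> V" "\<forall>u\<in>V. gdist E v0 u + \<omega> u \<le> gdist E v0 umax + \<omega> umax"
    and umax_ne: "umax \<noteq> v0"
    and umax_choice: "gdist E v0 v0 + \<omega> v0 < gdist E v0 umax + \<omega> umax"
    and Es: "distinct Es" "set Es = ladder V E v0 umax"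
  shows "\<forall>i < length Es.
     slice V E Es i = minority V E (Es ! i) - (\<Union>j<i. minority V E (Es ! j))
     \<and> gated V E (slice V E Es i)"
proof (intro allI impI)
  interpret mg V E using median by (unfold_locales)
  fix i assume i: "i < length Es"
  have cls: "\<And>j. j < length Es \<Longrightarrow> Es ! j \<in> theta_classes E"
    using Es(2) unfolding ladder_def by (metis (no_types, lifting) mem_Collect_eq nth_mem)
  have cm: "\<And>j. j < length Es \<Longrightarrow> \<exists>a b. (a,b)\<in>E \<and> Es ! j = F a b \<and> Es ! j = R``{{a,b}}
      \<and> minority V E (Es ! j) = W a b"
    using class_min cls small n3 by blast
  obtain a b where ab: "(a,b)\<in>E" "Es ! i = F a b" "Es ! i = R``{{a,b}}" "minority V E (Es ! i) = W a b"
    using cm[OF i] by blast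
  have MV: "minority V E (Es ! i) \<subseteq> V" using ab(4) W_V by auto
  have sl: "slice V E Es i = minority V E (Es ! i) - (\<Union>j<i. minority V E (Es ! j))"
    unfolding slice_def large_set_eq using MV by (auto simp: lessThan_Suc)
  have v0M: "\<And>j. j < length Es \<Longrightarrow> v0 \<notin> minority V E (Es ! j)"
    using v0(2) cls unfolding majority_def by blast
  have conv: "convex (slice V E Es i)"
    unfolding convex_def
  proof (intro conjI ballI impI)
    show "slice V E Es i \<subseteq> V" using sl MV by auto
    fix x y z assume x: "x \<in> slice V E Es i" and y: "y \<in> slice V E Es i" and zV: "z \<in> V"
      and z: "d x z + d z y = d x y"
    have "z \<in> W a b" using conv_W[OF ab(1) _ _ zV z] x y sl ab(4) by auto
    moreover have "z \<notin> minority V E (Es ! j)" if j: "j < i" for j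
    proof
      assume zM: "z \<in> minority V E (Es ! j)"
      obtain a' b' where ab': "(a',b')\<in>E" "minority V E (Es ! j) = W a' b'"
        using cm[of j] j i by auto
      have "x \<notin> W a' b'" "y \<notin> W a' b'" using x y sl ab' j by auto
      then have "x \<in> W b' a'" "y \<in> W b' a'" using notW_iff[OF ab'(1)] x y sl MV by auto
      then have "z \<in> W b' a'" using conv_W[OF symD'[OF ab'(1)] _ _ zV z] by simp
      then show False using notW_iff[OF ab'(1) zV] zM ab'(2) by simp
    qed
    ultimately show "z \<in> slice V E Es i" using sl ab(4) by auto
  qed
  have "Es ! i \<in> ladder V E v0 umax" using Es(2) i by (metis nth_mem)
  then obtain w where w: "(v0,w) \<in> E" "{v0,w} \<in> Es ! i" unfolding ladder_def by blast
  have v0W: "v0 \<notin> W a b" using v0M[OF i] ab(4) by simp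
  obtain u v where uv: "{v0,w} = {u,v}" "u \<in> W a b" "v \<notin> W a b" using w(2) ab(2) unfolding F_def by blast
  have wW: "w \<in> W a b" using uv v0W by (auto simp: doubleton_eq_iff)
  have "w \<in> slice V E Es i"
  proof -
    have "w \<notin> minority V E (Es ! j)" if j: "j < i" for j
    proof
      assume wM: "w \<in> minority V E (Es ! j)"
      obtain a' b' where ab': "(a',b')\<in>E" "Es ! j = F a' b'" "Es ! j = R``{{a',b'}}"
        "minority V E (Es ! j) = W a' b'" using cm[of j] j i by auto
      have "v0 \<notin> W a' b'" using v0M[of j] j i ab'(4) by simp
      then have "{w,v0} \<in> F a' b'" unfolding F_def using wM ab'(4) symD'[OF w(1)] by blast
      then have e: "{v0,w} \<in> Es ! j" using ab'(2) by (simp add: insert_commute)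
      have r1: "({a,b},{v0,w}) \<in> R" using w(2) ab(3) by auto
      have r2: "({a',b'},{v0,w}) \<in> R" using e ab'(3) by auto
      have "Es ! i = Es ! j"
        unfolding ab(3) ab'(3)
        using R_trans[OF r1 R_sym[OF r2]] R_trans[OF r2 R_sym[OF r1]] R_trans by blast
      then show False using Es(1) i j by (simp add: nth_eq_iff_index_eq)
    qed
    then show ?thesis using sl wW ab(4) by auto
  qed
  then have "gated V E (slice V E Es i)" using gated_conv[OF conv] by auto
  then show "slice V E Es i = minority V E (Es ! i) - (\<Union>j<i. minority V E (Es ! j)) \<and>
      gated V E (slice V E Es i)" using sl by simp
qed


end
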